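(* Let $\alpha>0$, $n\ge 3$. Let $w$ solve \[ w''+\frac{n-1}{t}w'+t^{\alpha}e^{w}=0,\qquad w(0)=0,\quad w'(0)=0, \] let $w_0(t)=\ln\bigl((2+\alpha)(n-2)\bigr)-(2+\alpha)\ln t$, and set $p(t)=w(t)-w_0(t)$. Let $t_0\in(0,\infty)$ and let $z$ be the solution of the Euler equation \[ z''+\frac{n-1}{t}z'+\frac{(2+\alpha)(n-2)}{t^2}z=0 \] with $z(t_0)=p(t_0)$ and $z'(t_0)=p'(t_0)$. If $z(t)<0$ on $(t_0,\infty)$, then $p(t)<0$ on $(t_0,\infty)$.
   Context: The solution $w$ is defined for all $t>0$. The function $w_0$ solves the same differential equation as $w$ for $t>0$. *)

theory Defs
  imports "HOL-Analysis.Analysis"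
begin

definition w0 :: "real \<Rightarrow> nat \<Rightarrow> real \<Rightarrow> real" where
  "w0 \<alpha> n t = ln ((2 + \<alpha>) * (real n - 2)) - (2 + \<alpha>) * ln t"

end

theory Submission
  imports Defs
begin

theorem lemma3p5:
  fixes \<alpha> :: real and n :: nat and t0 :: real
    and w w' w'' z z' z'' :: "real \<Rightarrow> real"
  assumes alpha: "\<alpha> > 0" and n: "n \<ge> 3"
    and w_d1: "\<And>t. t \<ge> 0 \<Longrightarrow> (w has_real_derivative w' t) (at t within {0..})"
    and w_d2: "\<And>t. t > 0 \<Longrightarrow> (w' has_real_derivative w'' t) (at t)"
    and w_ode: "\<And>t. t > 0 \<Longrightarrow> w'' t + (real n - 1) / t * w' t + t powr \<alpha> * exp (w t) = 0"
    and w_init: "w 0 = 0" "w' 0 = 0"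
    and t0: "t0 > 0"
    and z_d1: "\<And>t. t > 0 \<Longrightarrow> (z has_real_derivative z' t) (at t)"
    and z_d2: "\<And>t. t > 0 \<Longrightarrow> (z' has_real_derivative z'' t) (at t)"
    and z_ode: "\<And>t. t > 0 \<Longrightarrow>
        z'' t + (real n - 1) / t * z' t + (2 + \<alpha>) * (real n - 2) / t\<^sup>2 * z t = 0"
    and z_init: "z t0 = w t0 - w0 \<alpha> n t0"
      "((\<lambda>t. w t - w0 \<alpha> n t) has_real_derivative z' t0) (at t0)"
    and z_neg: "\<And>t. t > t0 \<Longrightarrow> z t < 0"
  shows "\<forall>t > t0. w t - w0 \<alpha> n t < 0"
proof -
  define K where "K = (2+\<alpha>)*(real n - 2)"
  have K: "K > 0" using alpha n unfolding K_def by auto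
  define p where "p = (\<lambda>t. w t - w0 \<alpha> n t)"
  define p1 where "p1 = (\<lambda>t. w' t + (2+\<alpha>)/t)"
  define p2 where "p2 = (\<lambda>t. w'' t - (2+\<alpha>)/t^2)"
  define m where "m = n - 1"
  have mreal: "real m = real n - 1" using n by (simp add: m_def)
  have m0: "m > 0" using n by (simp add: m_def)
  have wd: "(w has_real_derivative w' t) (at t)" if t: "t > 0" for t
  proof -
    have "(w has_real_derivative w' t) (at t within {0<..})"
      using t by (intro DERIV_subset[OF w_d1]) auto
    then show ?thesis using at_within_open[of t "{0<..}"] t by simp
  qed
  have pd1: "(p has_real_derivative p1 t) (at t)" if t: "t > 0" for t
    unfolding p_def p1_def w0_def using t
    by (auto intro!: derivative_eq_intros wd simp: field_simps)
  have pd2: "(p1 has_real_derivative p2 t) (at t)" if t: "t > 0" for t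
    unfolding p2_def p1_def using t
    by (auto intro!: derivative_eq_intros w_d2 simp: field_simps power2_eq_square)
  have expid: "t powr \<alpha> * exp (w t) = K / t^2 * exp (p t)" if t: "t > 0" for t
  proof -
    have e1: "exp (p t) = exp (w t) * t powr (2+\<alpha>) / K"
      using t K unfolding p_def w0_def K_def
      by (simp add: exp_diff exp_add powr_def)
    have e2: "t powr (2+\<alpha>) = t powr \<alpha> * t^2"
      using t by (simp add: powr_add powr_realpow mult.commute)
    show ?thesis using e1 e2 t K by (simp add: field_simps)
  qed
  have pode: "p2 t + real m / t * p1 t + K / t^2 * (exp (p t) - 1) = 0" if t: "t > 0" for t
  proof -
    have "w'' t + (real n - 1) / t * w' t + K / t^2 * exp (p t) = 0"
      using w_ode[OF t] expid[OF t] by simp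
    moreover have "p2 t + real m / t * p1 t + K / t^2 * (exp (p t) - 1)
      = (w'' t + (real n - 1) / t * w' t + K / t^2 * exp (p t)) + ((real n - 2)*(2+\<alpha>) - K)/t^2"
      using t unfolding p1_def p2_def mreal by (simp add: field_simps power2_eq_square)
    ultimately show ?thesis unfolding K_def by simp
  qed
  have zode: "z'' t = - (real m / t * z' t) - K / t^2 * z t" if t: "t > 0" for t
    using z_ode[OF t] unfolding mreal K_def by (simp add: algebra_simps)
  have p2e: "p2 t = - (real m / t * p1 t) - K / t^2 * (exp (p t) - 1)" if t: "t > 0" for t
    using pode[OF t] by (simp add: algebra_simps)
  have p1t0: "p1 t0 = z' t0"
    using DERIV_unique[OF pd1[OF t0] z_init(2)[folded p_def]] .
  have pt0: "p t0 = z t0" using z_init(1) unfolding p_def by simp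
  have zt0: "z t0 \<le> 0"
  proof -
    have "(z \<longlongrightarrow> z t0) (at_right t0)"
      using DERIV_isCont[OF z_d1[OF t0]] by (simp add: isCont_def filterlim_at_split)
    moreover have "eventually (\<lambda>s. z s \<le> 0) (at_right t0)"
      by (rule eventually_mono[OF eventually_at_right_less]) (auto intro: less_imp_le z_neg)
    ultimately show ?thesis by (rule tendsto_upperbound) simp
  qed
  define W where "W = (\<lambda>t. t^m * (p1 t * z t - p t * z' t))"
  have Wd: "(W has_real_derivative (- K * t^m / t^2 * z t * (exp (p t) - 1 - p t))) (at t)"
    if t: "t > 0" for t
  proof -
    have "(W has_real_derivative (real m * t^(m-1) * (p1 t * z t - p t * z' t)
       + t^m * (p2 t * z t + p1 t * z' t - (p1 t * z' t + p t * z'' t)))) (at t)"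
      unfolding W_def
      by (auto intro!: derivative_eq_intros pd1 pd2 z_d1 z_d2 t)
    moreover have "real m * t^(m-1) * (p1 t * z t - p t * z' t)
       + t^m * (p2 t * z t + p1 t * z' t - (p1 t * z' t + p t * z'' t))
       = - K * t^m / t^2 * z t * (exp (p t) - 1 - p t)"
    proof -
      have tm: "t^m = t * t^(m-1)" using m0 by (cases m) auto
      show ?thesis unfolding p2e[OF t] zode[OF t] tm using t
        by (simp add: field_simps power2_eq_square)
    qed
    ultimately show ?thesis by simp
  qed
  have Wt0: "W t0 = 0" unfolding W_def using p1t0 pt0 by simp
  have zle: "z x \<le> 0" if "x \<ge> t0" for x
    using that zt0 z_neg[of x] by (cases "x = t0") auto
  have Wnn: "W t \<ge> 0" if tt: "t \<ge> t0" for t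
  proof -
    have "W t0 \<le> W t"
    proof (rule DERIV_nonneg_imp_nondecreasing[OF tt])
      fix x assume x: "t0 \<le> x" "x \<le> t"
      have xp: "x > 0" using x t0 by simp
      have a: "- K * x^m / x^2 * z x \<ge> 0"
        by (rule mult_nonpos_nonpos) (use K xp zle[OF x(1)] in auto)
      have b: "exp (p x) - 1 - p x \<ge> 0" using exp_ge_add_one_self[of "p x"] by linarith
      show "\<exists>y. DERIV W x :> y \<and> y \<ge> 0"
        using Wd[OF xp] mult_nonneg_nonneg[OF a b] by blast
    qed
    then show ?thesis using Wt0 by simp
  qed
  have key: "p1 t * z t - p t * z' t \<ge> 0" if tt: "t > t0" for t
  proof -
    have "t^m > 0" using tt t0 by simp
    moreover have "t^m * (p1 t * z t - p t * z' t) \<ge> 0" using Wnn[of t] tt unfolding W_def by simp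
    ultimately show ?thesis by (simp add: zero_le_mult_iff)
  qed
  define q where "q = (\<lambda>t. p t / z t)"
  have qmono: "q s \<le> q t" if st: "t0 < s" "s \<le> t" for s t
    unfolding q_def
  proof (rule DERIV_nonneg_imp_nondecreasing[OF st(2)])
    fix x assume x: "s \<le> x" "x \<le> t"
    have xp: "x > t0" using x st by simp
    have zx: "z x \<noteq> 0" using z_neg[OF xp] by simp
    have "DERIV (\<lambda>t. p t / z t) x :> (p1 x * z x - p x * z' x) / (z x * z x)"
      using DERIV_divide[OF pd1 z_d1 zx] xp t0 by simp
    moreover have "(p1 x * z x - p x * z' x) / (z x * z x) \<ge> 0"
      using key[OF xp] by simp
    ultimately show "\<exists>y. DERIV (\<lambda>t. p t / z t) x :> y \<and> y \<ge> 0" by blast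
  qed
  show ?thesis
  proof (rule ccontr)
    assume "\<not> ?thesis"
    then obtain t1 where t1: "t1 > t0" "p t1 \<ge> 0" unfolding p_def by auto
    have qt1: "q t1 \<le> 0" unfolding q_def using t1 z_neg[OF t1(1)]
      by (simp add: divide_nonneg_neg)
    have pge: "p s \<ge> 0" if s: "t0 < s" "s \<le> t1" for s
    proof -
      have "q s \<le> 0" using qmono[OF s] qt1 by simp
      moreover have "z s < 0" using z_neg s by simp
      ultimately have "q s * z s \<ge> 0" by (simp add: mult_nonpos_nonpos)
      then show ?thesis unfolding q_def using \<open>z s < 0\<close> by simp
    qed
    have p1nn: "p1 t0 \<ge> 0"
    proof (rule ccontr)
      assume "\<not> ?thesis"
      then obtain d where d: "d > 0" "\<forall>h>0. h < d \<longrightarrow> p t0 > p (t0 + h)"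
        using DERIV_neg_dec_right[OF pd1[OF t0]] by force
      obtain e where e: "e \<le> t1 - t0" "e \<le> d" "e > 0"
      proof
        show "min d (t1 - t0) \<le> t1 - t0" "min d (t1 - t0) \<le> d" by simp_all
        show "min d (t1 - t0) > 0" using d(1) t1(1) by simp
      qed
      define h where "h = e / 2"
      have h: "h > 0" "h < d" "t0 + h \<le> t1" using e unfolding h_def by auto
      have "p (t0 + h) < p t0" using d h by blast
      moreover have "p (t0 + h) \<ge> 0" using pge h by simp
      moreover have "p t0 \<le> 0" using pt0 zt0 by simp
      ultimately show False by simp
    qed
    show False
    proof (cases "z t0 < 0")
      case True
      have "(p \<longlongrightarrow> p t0) (at_right t0)"
        using DERIV_isCont[OF pd1[OF t0]] by (simp add: isCont_def filterlim_at_split)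
      moreover have "eventually (\<lambda>s. p s \<ge> 0) (at_right t0)"
        by (rule eventually_mono[OF eventually_at_right_real[OF t1(1)]]) (auto intro: pge)
      ultimately have "p t0 \<ge> 0" by (rule tendsto_lowerbound) simp
      then show False using True pt0 by simp
    next
      case False
      then have z0: "z t0 = 0" using zt0 by simp
      have z'0: "z' t0 = 0"
      proof (rule ccontr)
        assume "z' t0 \<noteq> 0"
        then have "z' t0 > 0" using p1nn p1t0 by simp
        then obtain d where d: "d > 0" "\<forall>h>0. h < d \<longrightarrow> z t0 < z (t0 + h)"
          using DERIV_pos_inc_right[OF z_d1[OF t0]] by force
        have "z t0 < z (t0 + d/2)" using d by simp
        moreover have "z (t0 + d/2) < 0" using z_neg d by simp
        ultimately show False using z0 by simp
      qed
      define C where "C = 1 + K / t0^2"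
      define F where "F = (\<lambda>t. ((z t)^2 + (z' t)^2) * exp (- C * t))"
      have "F (t0 + 1) \<le> F t0"
      proof (rule DERIV_nonpos_imp_nonincreasing[of t0 "t0 + 1" F])
        fix x assume x: "t0 \<le> x" "x \<le> t0 + 1"
        have xp: "x > 0" using x t0 by simp
        have d: "DERIV F x :> ((2 * z x * z' x + 2 * z' x * z'' x) - C * ((z x)^2 + (z' x)^2)) * exp (- C * x)"
          unfolding F_def
          by (auto intro!: derivative_eq_intros z_d1 z_d2 xp simp: algebra_simps)
        define a where "a = z x"
        define b where "b = z' x"
        define c where "c = 1 - K / x^2"
        have e: "2 * z x * z' x + 2 * z' x * z'' x = 2 * a * b * c - 2 * real m / x * b^2"
          unfolding a_def b_def c_def zode[OF xp] by (simp add: algebra_simps power2_eq_square)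
        have h1: "2 * a * b * c \<le> \<bar>2 * a * b\<bar> * \<bar>c\<bar>"
          by (metis abs_ge_self abs_mult)
        have h2: "\<bar>2 * a * b\<bar> \<le> a^2 + b^2"
        proof -
          have "0 \<le> (a - b)^2" "0 \<le> (a + b)^2" by simp_all
          then show ?thesis by (simp add: abs_le_iff power2_eq_square algebra_simps)
        qed
        have kk: "K / x^2 \<le> K / t0^2"
          using K x t0 by (intro divide_left_mono) (auto intro: power_mono mult_pos_pos)
        have h3: "\<bar>c\<bar> \<le> C"
          proof -
          have "K / x^2 \<ge> 0" "K / t0^2 \<ge> 0" using K by simp_all
          then show ?thesis unfolding c_def C_def using kk by (auto simp: abs_le_iff)
        qed
        have h4: "\<bar>2 * a * b\<bar> * \<bar>c\<bar> \<le> (a^2 + b^2) * C"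
          by (rule mult_mono[OF h2 h3]) auto
        have h5: "2 * real m / x * b^2 \<ge> 0" using xp by simp
        have "(2 * z x * z' x + 2 * z' x * z'' x) - C * ((z x)^2 + (z' x)^2) \<le> 0"
          using e h1 h4 h5 unfolding a_def b_def by (simp add: algebra_simps)
        then have "((2 * z x * z' x + 2 * z' x * z'' x) - C * ((z x)^2 + (z' x)^2)) * exp (- C * x) \<le> 0"
          by (simp add: mult_nonpos_nonneg)
        then show "\<exists>y. DERIV F x :> y \<and> y \<le> 0" using d by blast
      qed simp
      then have "((z (t0+1))^2 + (z' (t0+1))^2) * exp (- C * (t0+1)) \<le> 0"
        unfolding F_def using z0 z'0 by simp
      then have "(z (t0+1))^2 + (z' (t0+1))^2 \<le> 0"
        by (simp add: mult_le_0_iff)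
      then have "z (t0+1) = 0" by (smt (verit) zero_le_power2 zero_eq_power2)
      moreover have "z (t0+1) < 0" using z_neg by simp
      ultimately show False by simp
    qed
  qed
qed

end
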